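(* Let $m,n$ be positive integers with $2m\le n$ and let $0<\delta,p,q<1$ be real numbers such that $pn$ and $qn$ are integers. Let $S$ and $T$ be uniformly random $pn$- and $qn$-element subsets of $\{1,\ldots,n\}$, respectively, chosen independently. Let $I$ be the set of indices $i\in\{1,\ldots,m\}$ such that $|\{2i-1,2i\}\cap S|=|\{2i-1,2i\}\cap T|=1$. Then \[\mathbb{P}\big[|I|\le(1-\delta)\cdot 4p(1-p)q(1-q)m\big]\le (n+1)^2e^{-\delta^2\cdot 4p(1-p)q(1-q)m/2}.\] *)

theory Defs
  imports "HOL-Probability.Probability"
begin

definition ksubsets :: "nat \<Rightarrow> nat \<Rightarrow> nat set set" where
  "ksubsets n k = {S. S \<subseteq> {1..n} \<and> card S = k}"

definition goodI :: "nat \<Rightarrow> nat set \<Rightarrow> nat set \<Rightarrow> nat set" where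
  "goodI m S T = {i \<in> {1..m}. card ({2*i-1, 2*i} \<inter> S) = 1 \<and> card ({2*i-1, 2*i} \<inter> T) = 1}"

end

theory Submission
  imports Defs
begin

lemma exp_neg_le: fixes x :: real assumes "0 \<le> x" shows "exp (-x) \<le> 1 - x + x^2/2"
proof -
  let ?f = "\<lambda>x::real. 1 - x + x^2/2 - exp (-x)"
  have "?f 0 \<le> ?f x"
  proof (rule DERIV_nonneg_imp_nondecreasing[OF assms])
    fix y :: real assume "0 \<le> y" "y \<le> x"
    have "DERIV ?f y :> (-1 + y + exp (-y))"
      by (auto intro!: derivative_eq_intros)
    moreover have "-1 + y + exp (-y) \<ge> 0" using exp_ge_add_one_self[of "-y"] by simp
    ultimately show "\<exists>d. DERIV ?f y :> d \<and> d \<ge> 0" by blast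
  qed
  thus ?thesis by simp
qed

definition bin :: "nat \<Rightarrow> real \<Rightarrow> nat \<Rightarrow> real" where
  "bin n p j = real (n choose j) * p^j * (1-p)^(n-j)"

lemma bin_step:
  assumes "0 < p" "p < 1" "j < n"
  shows "bin n p (Suc j) * (real (Suc j) * (1-p)) = bin n p j * (real (n - j) * p)"
proof -
  have c: "real (n choose Suc j) * real (Suc j) = real (n choose j) * real (n - j)"
  proof -
    have "(n - j) * (n choose j) = n * ((n - 1) choose j)" by (rule binomial_absorb_comp)
    moreover have "Suc j * (n choose Suc j) = n * ((n - 1) choose j)"
      using times_binomial_minus1_eq[of "Suc j" n] by simp
    ultimately have "(n choose Suc j) * Suc j = (n choose j) * (n - j)" by (simp add: mult.commute)
    thus ?thesis by (metis of_nat_mult)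
  qed
  have e: "(1-p)^(n-j) = (1-p) * (1-p)^(n - Suc j)" using assms(3)
    by (metis Suc_diff_Suc power_Suc)
  have "bin n p (Suc j) * (real (Suc j) * (1-p)) = (real (n choose Suc j) * real (Suc j)) * (p^Suc j * (1-p)^(n - Suc j) * (1-p))"
    unfolding bin_def by (simp only: ac_simps)
  also have "\<dots> = (real (n choose j) * real (n - j)) * (p^Suc j * (1-p)^(n - Suc j) * (1-p))"
    by (simp only: c)
  also have "\<dots> = bin n p j * (real (n - j) * p)"
    unfolding bin_def e by (simp only: ac_simps power_Suc)
  finally show ?thesis .
qed

lemma bin_nonneg: "0 \<le> p \<Longrightarrow> p \<le> 1 \<Longrightarrow> 0 \<le> bin n p j"
  unfolding bin_def by simp

lemma bin_mode:
  assumes "0 < p" "p < 1" "real k = p * real n" "j \<le> n"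
  shows "bin n p j \<le> bin n p k"
proof (cases "j \<le> k")
  case True
  show ?thesis using True
  proof (induction j rule: inc_induct)
    case base thus ?case by simp
  next
    case (step i)
    have kn: "k \<le> n" using assms by (metis mult_left_le_one_le of_nat_0_le_iff of_nat_le_iff less_imp_le)
    have "real (Suc i) * (1-p) \<le> real (n - i) * p"
    proof -
      have "real (Suc i) \<le> real k" using step by simp
      hence "real i + 1 \<le> p * real n" using assms by simp
      moreover have "real (n - i) = real n - real i" using step kn by simp
      ultimately show ?thesis using assms by (simp add: algebra_simps)
    qed
    hence "bin n p i * (real (Suc i) * (1-p)) \<le> bin n p i * (real (n - i) * p)"
      using bin_nonneg[of p n i] assms by (intro mult_left_mono) auto
    also have "\<dots> = bin n p (Suc i) * (real (Suc i) * (1-p))"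
      using bin_step[of p i n] assms step kn by simp
    finally have "bin n p i \<le> bin n p (Suc i)" using assms
      by (simp add: mult_le_cancel_right)
    thus ?case using step by simp
  qed
next
  case False
  hence kj: "k \<le> j" by simp
  show ?thesis using kj assms(4)
  proof (induction j rule: dec_induct)
    case base thus ?case by simp
  next
    case (step i)
    have "real (n - i) * p \<le> real (Suc i) * (1-p)"
    proof -
      have "real k \<le> real i" using step by simp
      hence "p * real n \<le> real i" using assms by simp
      moreover have "real (n - i) = real n - real i" using step by simp
      ultimately show ?thesis using assms by (simp add: algebra_simps)
    qed
    hence "bin n p (Suc i) * (real (Suc i) * (1-p)) \<le> bin n p i * (real (Suc i) * (1-p))"
      using bin_step[of p i n] assms step bin_nonneg[of p n i] by (simp add: mult_left_mono)
    hence "bin n p (Suc i) \<le> bin n p i" using assms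
      by (simp add: mult_le_cancel_right)
    thus ?case using step by simp
  qed
qed

lemma bin_mode_bound:
  assumes "0 < p" "p < 1" "real k = p * real n"
  shows "1 \<le> (real n + 1) * bin n p k"
proof -
  have "1 = (p + (1 - p))^n" by simp
  also have "\<dots> = (\<Sum>j\<le>n. bin n p j)"
    unfolding binomial_ring bin_def by simp
  also have "\<dots> \<le> (\<Sum>j\<le>n. bin n p k)"
    by (rule sum_mono) (use bin_mode[OF assms] in auto)
  also have "\<dots> = (real n + 1) * bin n p k" by simp
  finally show ?thesis .
qed

definition wt :: "nat set \<Rightarrow> real \<Rightarrow> nat set \<Rightarrow> real" where
  "wt A p S = (\<Prod>j\<in>A. if j \<in> S then p else 1 - p)"

lemma wt_pow:
  assumes "finite A" "S \<subseteq> A"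
  shows "wt A p S = p ^ card S * (1-p) ^ (card A - card S)"
proof -
  have "wt A p S = prod (\<lambda>_. p) (A \<inter> {x. x \<in> S}) * prod (\<lambda>_. 1-p) (A \<inter> - {x. x \<in> S})"
    unfolding wt_def by (rule prod.If_cases[OF assms(1)])
  also have "A \<inter> {x. x \<in> S} = S" using assms by auto
  also have "A \<inter> - {x. x \<in> S} = A - S" by auto
  finally show ?thesis using assms by (simp add: card_Diff_subset finite_subset)
qed

lemma wt_sum:
  assumes "finite A"
  shows "(\<Sum>S\<in>Pow A. wt A p S) = 1"
proof -
  have "(1::real) = (\<Prod>x\<in>A. p + (1 - p))" by simp
  also have "\<dots> = (\<Sum>X\<in>Pow A. (\<Prod>x\<in>X. p) * (\<Prod>x\<in>A-X. 1 - p))"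
    by (rule prod_add[OF assms])
  also have "\<dots> = (\<Sum>S\<in>Pow A. wt A p S)"
  proof (rule sum.cong[OF refl])
    fix X assume "X \<in> Pow A"
    hence "A \<inter> {x. x \<in> X} = X" "A \<inter> - {x. x \<in> X} = A - X" by auto
    thus "(\<Prod>x\<in>X. p) * (\<Prod>x\<in>A-X. 1 - p) = wt A p X"
      unfolding wt_def prod.If_cases[OF assms] by simp
  qed
  finally show ?thesis by simp
qed

lemma wt_union:
  assumes "finite B" "finite C" "B \<inter> C = {}" "U \<subseteq> B" "V \<subseteq> C"
  shows "wt (B \<union> C) p (U \<union> V) = wt B p U * wt C p V"
proof -
  have "wt (B \<union> C) p (U \<union> V) = (\<Prod>j\<in>B. if j \<in> U \<union> V then p else 1 - p) * (\<Prod>j\<in>C. if j \<in> U \<union> V then p else 1 - p)"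
    unfolding wt_def by (rule prod.union_disjoint[OF assms(1-3)])
  also have "(\<Prod>j\<in>B. if j \<in> U \<union> V then p else 1 - p) = wt B p U"
    unfolding wt_def using assms by (intro prod.cong) auto
  also have "(\<Prod>j\<in>C. if j \<in> U \<union> V then p else 1 - p) = wt C p V"
    unfolding wt_def using assms by (intro prod.cong) auto
  finally show ?thesis .
qed

lemma pow_split:
  assumes "finite B" "finite C" "B \<inter> C = {}"
  shows "(\<Sum>S\<in>Pow (B \<union> C). F S) = (\<Sum>U\<in>Pow B. \<Sum>V\<in>Pow C. F (U \<union> V))"
proof -
  have "(\<Sum>U\<in>Pow B. \<Sum>V\<in>Pow C. F (U \<union> V)) = (\<Sum>(U,V)\<in>Pow B \<times> Pow C. F (U \<union> V))"
    by (rule sum.cartesian_product)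
  also have "\<dots> = (\<Sum>S\<in>Pow (B \<union> C). F S)"
    by (rule sum.reindex_bij_witness[of _ "\<lambda>S. (S \<inter> B, S \<inter> C)" "\<lambda>(U,V). U \<union> V"])
       (use assms in auto)
  finally show ?thesis by simp
qed

lemma four_sum:
  "(\<Sum>U\<in>X. \<Sum>V\<in>Y. \<Sum>U'\<in>X. \<Sum>V'\<in>Y. (a U U' :: real) * b V V')
   = (\<Sum>U\<in>X. \<Sum>U'\<in>X. a U U') * (\<Sum>V\<in>Y. \<Sum>V'\<in>Y. b V V')"
proof -
  have "(\<Sum>U\<in>X. \<Sum>V\<in>Y. \<Sum>U'\<in>X. \<Sum>V'\<in>Y. a U U' * b V V')
      = (\<Sum>U\<in>X. \<Sum>U'\<in>X. \<Sum>V\<in>Y. \<Sum>V'\<in>Y. a U U' * b V V')"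
    by (rule sum.cong[OF refl], rule sum.swap)
  also have "\<dots> = (\<Sum>U\<in>X. \<Sum>U'\<in>X. a U U' * (\<Sum>V\<in>Y. \<Sum>V'\<in>Y. b V V'))"
    by (simp add: sum_distrib_left)
  also have "\<dots> = (\<Sum>U\<in>X. \<Sum>U'\<in>X. a U U') * (\<Sum>V\<in>Y. \<Sum>V'\<in>Y. b V V')"
    by (simp add: sum_distrib_right)
  finally show ?thesis .
qed

lemma block_fact:
  assumes "finite J" "finite A" "\<forall>i\<in>J. Bk i \<subseteq> A" "\<forall>i\<in>J. \<forall>j\<in>J. i \<noteq> j \<longrightarrow> Bk i \<inter> Bk j = {}"
  shows "(\<Sum>S\<in>Pow A. \<Sum>T\<in>Pow A. wt A p S * wt A q T * (\<Prod>i\<in>J. h i (S \<inter> Bk i) (T \<inter> Bk i)))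
       = (\<Prod>i\<in>J. \<Sum>U\<in>Pow (Bk i). \<Sum>V\<in>Pow (Bk i). wt (Bk i) p U * wt (Bk i) q V * h i U V)"
  using assms
proof (induction J arbitrary: A rule: finite_induct)
  case empty
  have "(\<Sum>S\<in>Pow A. \<Sum>T\<in>Pow A. wt A p S * wt A q T) = (\<Sum>S\<in>Pow A. wt A p S) * (\<Sum>T\<in>Pow A. wt A q T)"
    by (simp add: sum_product)
  thus ?case using wt_sum[OF empty.prems(1)] by simp
next
  case (insert i J)
  define B where "B = Bk i"
  define C where "C = A - B"
  have fB: "finite B" and fC: "finite C" using insert B_def C_def by (auto intro: finite_subset)
  have dBC: "B \<inter> C = {}" and AC: "A = B \<union> C" using insert unfolding B_def C_def by auto
  have JC: "\<forall>j\<in>J. Bk j \<subseteq> C" using insert unfolding B_def C_def by fastforce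
  have IH: "(\<Sum>S\<in>Pow C. \<Sum>T\<in>Pow C. wt C p S * wt C q T * (\<Prod>j\<in>J. h j (S \<inter> Bk j) (T \<inter> Bk j)))
       = (\<Prod>j\<in>J. \<Sum>U\<in>Pow (Bk j). \<Sum>V\<in>Pow (Bk j). wt (Bk j) p U * wt (Bk j) q V * h j U V)"
    using insert.IH[OF fC JC] insert.prems by auto
  let ?G = "\<lambda>S T. wt A p S * wt A q T * (\<Prod>i\<in>insert i J. h i (S \<inter> Bk i) (T \<inter> Bk i))"
  let ?a = "\<lambda>U U'. wt B p U * wt B q U' * h i U U'"
  let ?b = "\<lambda>V V'. wt C p V * wt C q V' * (\<Prod>j\<in>J. h j (V \<inter> Bk j) (V' \<inter> Bk j))"
  have key: "?G (U \<union> V) (U' \<union> V') = ?a U U' * ?b V V'"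
    if "U \<in> Pow B" "V \<in> Pow C" "U' \<in> Pow B" "V' \<in> Pow C" for U V U' V'
  proof -
    have w1: "wt A p (U \<union> V) = wt B p U * wt C p V" unfolding AC
      using wt_union[OF fB fC dBC] that by auto
    have w2: "wt A q (U' \<union> V') = wt B q U' * wt C q V'" unfolding AC
      using wt_union[OF fB fC dBC] that by auto
    have i1: "(U \<union> V) \<inter> Bk i = U" "(U' \<union> V') \<inter> Bk i = U'" using that dBC B_def by auto
    have dj: "Bk j \<inter> B = {}" if "j \<in> J" for j
      using insert.prems(3) insert.hyps(2) that unfolding B_def by (metis insertCI)
    have "(\<Prod>j\<in>J. h j ((U \<union> V) \<inter> Bk j) ((U' \<union> V') \<inter> Bk j)) = (\<Prod>j\<in>J. h j (V \<inter> Bk j) (V' \<inter> Bk j))"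
    proof (rule prod.cong[OF refl])
      fix j assume "j \<in> J"
      hence "(U \<union> V) \<inter> Bk j = V \<inter> Bk j" "(U' \<union> V') \<inter> Bk j = V' \<inter> Bk j"
        using dj[of j] that by auto
      thus "h j ((U \<union> V) \<inter> Bk j) ((U' \<union> V') \<inter> Bk j) = h j (V \<inter> Bk j) (V' \<inter> Bk j)" by simp
    qed
    thus ?thesis using w1 w2 i1 insert.hyps unfolding B_def by (simp add: ac_simps)
  qed
  have "(\<Sum>S\<in>Pow A. \<Sum>T\<in>Pow A. ?G S T) = (\<Sum>U\<in>Pow B. \<Sum>V\<in>Pow C. \<Sum>T\<in>Pow A. ?G (U \<union> V) T)"
    unfolding AC by (rule pow_split[OF fB fC dBC])
  also have "\<dots> = (\<Sum>U\<in>Pow B. \<Sum>V\<in>Pow C. \<Sum>U'\<in>Pow B. \<Sum>V'\<in>Pow C. ?G (U \<union> V) (U' \<union> V'))"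
    unfolding AC by (intro sum.cong refl pow_split[OF fB fC dBC])
  also have "\<dots> = (\<Sum>U\<in>Pow B. \<Sum>V\<in>Pow C. \<Sum>U'\<in>Pow B. \<Sum>V'\<in>Pow C. ?a U U' * ?b V V')"
    by (intro sum.cong refl key) auto
  also have "\<dots> = (\<Sum>U\<in>Pow B. \<Sum>U'\<in>Pow B. ?a U U') * (\<Sum>V\<in>Pow C. \<Sum>V'\<in>Pow C. ?b V V')"
    by (rule four_sum)
  also have "\<dots> = (\<Prod>i\<in>insert i J. \<Sum>U\<in>Pow (Bk i). \<Sum>V\<in>Pow (Bk i). wt (Bk i) p U * wt (Bk i) q V * h i U V)"
    using IH insert.hyps unfolding B_def by simp
  finally show ?case .
qed

lemma pair_card1:
  assumes "a \<noteq> b"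
  shows "(\<Sum>U\<in>Pow {a,b}. wt {a,b} p U * (if card U = 1 then 1 else 0)) = 2*p*(1-p)"
proof -
  have P: "Pow {a,b} = {{}, {a}, {b}, {a,b}}" by blast
  show ?thesis unfolding P wt_def using assms by (simp add: algebra_simps)
qed

lemma block_val:
  assumes "a \<noteq> b"
  shows "(\<Sum>U\<in>Pow {a,b}. \<Sum>V\<in>Pow {a,b}. wt {a,b} p U * wt {a,b} q V * exp (-t * (if card U = 1 \<and> card V = 1 then 1 else 0)))
       = 1 - (1 - exp (-t)) * ((2*p*(1-p)) * (2*q*(1-q)))"
proof -
  let ?i = "\<lambda>U::nat set. (if card U = 1 then 1 else 0::real)"
  have h: "exp (-t * (if card U = 1 \<and> card V = 1 then 1 else 0)) = 1 - (1 - exp (-t)) * (?i U * ?i V)" for U V :: "nat set"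
    by auto
  have "(\<Sum>U\<in>Pow {a,b}. \<Sum>V\<in>Pow {a,b}. wt {a,b} p U * wt {a,b} q V * exp (-t * (if card U = 1 \<and> card V = 1 then 1 else 0)))
     = (\<Sum>U\<in>Pow {a,b}. \<Sum>V\<in>Pow {a,b}. wt {a,b} p U * wt {a,b} q V)
       - (1 - exp (-t)) * (\<Sum>U\<in>Pow {a,b}. \<Sum>V\<in>Pow {a,b}. (wt {a,b} p U * ?i U) * (wt {a,b} q V * ?i V))"
    (is "?L = ?R")
  proof -
    have "?L = (\<Sum>U\<in>Pow {a,b}. \<Sum>V\<in>Pow {a,b}. wt {a,b} p U * wt {a,b} q V
       - (1 - exp (-t)) * ((wt {a,b} p U * ?i U) * (wt {a,b} q V * ?i V)))"
      by (intro sum.cong refl, subst h) (simp only: ring_distribs mult_ac)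
    also have "\<dots> = ?R" by (simp only: sum_subtractf sum_distrib_left)
    finally show ?thesis .
  qed
  also have "\<dots> = (\<Sum>U\<in>Pow {a,b}. wt {a,b} p U) * (\<Sum>V\<in>Pow {a,b}. wt {a,b} q V)
       - (1 - exp (-t)) * ((\<Sum>U\<in>Pow {a,b}. wt {a,b} p U * ?i U) * (\<Sum>V\<in>Pow {a,b}. wt {a,b} q V * ?i V))"
    by (simp add: sum_product)
  also have "\<dots> = 1 - (1 - exp (-t)) * ((2*p*(1-p)) * (2*q*(1-q)))"
    using wt_sum[of "{a,b}"] pair_card1[OF assms] by simp
  finally show ?thesis .
qed

lemma card_filter_sum:
  "finite I \<Longrightarrow> real (card {i\<in>I. P i}) = (\<Sum>i\<in>I. if P i then 1 else 0)"
  by (simp add: sum.If_cases Int_def)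

lemma le_mult_ge1: "0 \<le> (x::real) \<Longrightarrow> 1 \<le> y \<Longrightarrow> x \<le> x * y"
  by (metis mult_left_mono mult_1_right)

theorem proposition2p3:
  fixes m n k l :: nat and \<delta> p q :: real
  assumes "m > 0" "n > 0" "2 * m \<le> n"
    and "0 < \<delta>" "\<delta> < 1" "0 < p" "p < 1" "0 < q" "q < 1"
    and "real k = p * real n" "real l = q * real n"
  shows "measure_pmf.prob (pair_pmf (pmf_of_set (ksubsets n k)) (pmf_of_set (ksubsets n l)))
           {(S, T). real (card (goodI m S T)) \<le> (1 - \<delta>) * (4 * p * (1 - p) * q * (1 - q) * real m)}
         \<le> (real n + 1)^2 * exp (- (\<delta>^2 * (4 * p * (1 - p) * q * (1 - q) * real m) / 2))"
proof -
  define A where "A = {1..n}"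
  define K where "K = ksubsets n k"
  define L where "L = ksubsets n l"
  define r where "r = 4 * p * (1 - p) * q * (1 - q)"
  define a where "a = (1 - \<delta>) * (r * real m)"
  define X where "X = (\<lambda>S T. real (card (goodI m S T)))"
  define E where "E = {(S, T). X S T \<le> a}"
  define c where "c = 1 - exp (-\<delta>)"
  define M where "M = pair_pmf (pmf_of_set K) (pmf_of_set L)"
  have fA: "finite A" and cA: "card A = n" unfolding A_def by auto
  have kn: "k \<le> n" using assms(6,7,10) by (metis less_imp_le mult_left_le_one_le of_nat_0_le_iff of_nat_le_iff)
  have ln: "l \<le> n" using assms(8,9,11) by (metis less_imp_le mult_left_le_one_le of_nat_0_le_iff of_nat_le_iff)
  have Ksub: "K \<subseteq> Pow A" and Lsub: "L \<subseteq> Pow A" unfolding K_def L_def ksubsets_def A_def by auto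
  have fK: "finite K" and fL: "finite L" using Ksub Lsub fA by (auto intro: finite_subset)
  have cK: "card K = n choose k" unfolding K_def ksubsets_def using n_subsets[of "{1..n}" k] by simp
  have cL: "card L = n choose l" unfolding L_def ksubsets_def using n_subsets[of "{1..n}" l] by simp
  have K0: "K \<noteq> {}" using cK kn fK by auto
  have L0: "L \<noteq> {}" using cL ln fL by auto
  have "measure_pmf.prob M E = measure_pmf.prob M (E \<inter> set_pmf M)"
    by (rule measure_Int_set_pmf[symmetric])
  also have "set_pmf M = K \<times> L" unfolding M_def using fK fL K0 L0 by simp
  also have "measure_pmf.prob M (E \<inter> (K \<times> L)) = (\<Sum>x\<in>E \<inter> (K \<times> L). pmf M x)"
    by (rule measure_measure_pmf_finite) (use fK fL in auto)
  also have "\<dots> = (\<Sum>x\<in>(K \<times> L) \<inter> E. 1 / (real (card K) * real (card L)))"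
    by (rule sum.cong) (auto simp: M_def pmf_pair fK fL K0 L0)
  also have "\<dots> = (\<Sum>x\<in>K \<times> L. if x \<in> E then 1 / (real (card K) * real (card L)) else 0)"
    by (rule sum.inter_restrict[OF finite_cartesian_product[OF fK fL]])
  finally have P1: "measure_pmf.prob M E = \<dots>" .
  have wK: "1 / real (card K) \<le> (real n + 1) * wt A p S" if "S \<in> K" for S
  proof -
    have S: "S \<subseteq> A" "card S = k" using that unfolding K_def ksubsets_def A_def by auto
    have w: "wt A p S = p^k * (1-p)^(n-k)" using wt_pow[OF fA S(1)] S cA by simp
    have "1 \<le> (real n + 1) * bin n p k" by (rule bin_mode_bound) (use assms in auto)
    hence "1 \<le> real (card K) * ((real n + 1) * wt A p S)" unfolding w cK bin_def by (simp add: ac_simps)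
    moreover have "real (card K) > 0" using fK K0 by (simp add: card_gt_0_iff)
    ultimately show ?thesis by (simp add: divide_le_eq ac_simps)
  qed
  have wL: "1 / real (card L) \<le> (real n + 1) * wt A q T" if "T \<in> L" for T
  proof -
    have T: "T \<subseteq> A" "card T = l" using that unfolding L_def ksubsets_def A_def by auto
    have w: "wt A q T = q^l * (1-q)^(n-l)" using wt_pow[OF fA T(1)] T cA by simp
    have "1 \<le> (real n + 1) * bin n q l" by (rule bin_mode_bound) (use assms in auto)
    hence "1 \<le> real (card L) * ((real n + 1) * wt A q T)" unfolding w cL bin_def by (simp add: ac_simps)
    moreover have "real (card L) > 0" using fL L0 by (simp add: card_gt_0_iff)
    ultimately show ?thesis by (simp add: divide_le_eq ac_simps)
  qed
  have wt_nn: "0 \<le> wt A x S" if "0 \<le> x" "x \<le> 1" for x S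
    unfolding wt_def using that by (intro prod_nonneg) auto
  define F where "F = (\<lambda>(S,T). wt A p S * wt A q T * exp (-\<delta> * X S T))"
  have F_nn: "0 \<le> F x" for x unfolding F_def using wt_nn assms by (auto split: prod.splits)
  have S1: "(\<Sum>x\<in>K \<times> L. if x \<in> E then 1 / (real (card K) * real (card L)) else 0)
      \<le> (\<Sum>x\<in>K \<times> L. (real n + 1)^2 * exp (\<delta> * a) * F x)"
  proof (rule sum_mono)
    fix x assume x: "x \<in> K \<times> L"
    obtain S T where ST: "x = (S,T)" "S \<in> K" "T \<in> L" using x by auto
    show "(if x \<in> E then 1 / (real (card K) * real (card L)) else 0) \<le> (real n + 1)^2 * exp (\<delta> * a) * F x"
    proof (cases "x \<in> E")
      case False thus ?thesis using F_nn[of x] by simp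
    next
      case True
      hence "X S T \<le> a" using ST unfolding E_def by auto
      hence e1: "1 \<le> exp (\<delta> * a) * exp (-\<delta> * X S T)"
        using assms(4) by (simp add: exp_add[symmetric] algebra_simps)
      have "1 / (real (card K) * real (card L)) = (1 / real (card K)) * (1 / real (card L))" by simp
      also have "\<dots> \<le> ((real n + 1) * wt A p S) * ((real n + 1) * wt A q T)"
        by (rule mult_mono) (use wK[OF ST(2)] wL[OF ST(3)] wt_nn assms in auto)
      also have "\<dots> \<le> ((real n + 1) * wt A p S) * ((real n + 1) * wt A q T) * (exp (\<delta> * a) * exp (-\<delta> * X S T))"
        by (rule le_mult_ge1[OF _ e1]) (use wt_nn[of p S] wt_nn[of q T] assms in simp)
      also have "\<dots> = (real n + 1)^2 * exp (\<delta> * a) * F x"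
        unfolding F_def ST by (simp add: power2_eq_square ac_simps)
      finally show ?thesis using True by simp
    qed
  qed
  define Bk where "Bk = (\<lambda>i::nat. {2*i-1, 2*i})"
  define h where "h = (\<lambda>(U::nat set) (V::nat set). exp (-\<delta> * (if card U = 1 \<and> card V = 1 then 1 else 0)))"
  have expX: "exp (-\<delta> * X S T) = (\<Prod>i\<in>{1..m}. h (S \<inter> Bk i) (T \<inter> Bk i))" for S T
  proof -
    have "X S T = (\<Sum>i\<in>{1..m}. if card (Bk i \<inter> S) = 1 \<and> card (Bk i \<inter> T) = 1 then 1 else 0)"
      unfolding X_def goodI_def Bk_def by (rule card_filter_sum) simp
    hence "-\<delta> * X S T = (\<Sum>i\<in>{1..m}. -\<delta> * (if card (S \<inter> Bk i) = 1 \<and> card (T \<inter> Bk i) = 1 then 1 else 0))"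
      by (simp add: sum_distrib_left Int_commute)
    thus ?thesis unfolding h_def by (simp add: exp_sum)
  qed
  have Fsum: "(\<Sum>x\<in>Pow A \<times> Pow A. F x) = (\<Sum>S\<in>Pow A. \<Sum>T\<in>Pow A. wt A p S * wt A q T * (\<Prod>i\<in>{1..m}. h (S \<inter> Bk i) (T \<inter> Bk i)))"
    unfolding sum.cartesian_product F_def expX by simp
  have BF: "(\<Sum>S\<in>Pow A. \<Sum>T\<in>Pow A. wt A p S * wt A q T * (\<Prod>i\<in>{1..m}. h (S \<inter> Bk i) (T \<inter> Bk i)))
     = (\<Prod>i\<in>{1..m}. \<Sum>U\<in>Pow (Bk i). \<Sum>V\<in>Pow (Bk i). wt (Bk i) p U * wt (Bk i) q V * h U V)"
    by (rule block_fact[where h="\<lambda>_. h", OF _ fA]) (use assms(3) in \<open>auto simp: Bk_def A_def\<close>)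
  have BV: "(\<Sum>U\<in>Pow (Bk i). \<Sum>V\<in>Pow (Bk i). wt (Bk i) p U * wt (Bk i) q V * h U V) = 1 - c * r"
    if "i \<in> {1..m}" for i
  proof -
    have ne: "2*i-1 \<noteq> 2*i" using that by auto
    have e: "(1 - exp (-\<delta>)) * ((2*p*(1-p)) * (2*q*(1-q))) = c * r" unfolding c_def r_def by (simp add: algebra_simps)
    from block_val[OF ne, of p q \<delta>] show ?thesis unfolding Bk_def h_def e .
  qed
  have Pbound: "measure_pmf.prob M E \<le> (real n + 1)^2 * exp (\<delta> * a) * (1 - c * r) ^ m"
  proof -
    have "measure_pmf.prob M E \<le> (\<Sum>x\<in>K \<times> L. (real n + 1)^2 * exp (\<delta> * a) * F x)"
      using P1 S1 by simp
    also have "\<dots> = (real n + 1)^2 * exp (\<delta> * a) * (\<Sum>x\<in>K \<times> L. F x)"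
      by (simp add: sum_distrib_left)
    also have "\<dots> \<le> (real n + 1)^2 * exp (\<delta> * a) * (\<Sum>x\<in>Pow A \<times> Pow A. F x)"
      by (intro mult_left_mono sum_mono2) (use Ksub Lsub fA F_nn in auto)
    also have "\<dots> = (real n + 1)^2 * exp (\<delta> * a) * (1 - c * r) ^ m"
      unfolding Fsum BF using BV by simp
    finally show ?thesis .
  qed
  have r0: "0 \<le> r" unfolding r_def using assms by simp
  have r1: "r \<le> 1"
  proof -
    have "0 \<le> (p - 1/2)^2" by simp
    hence hp: "p * (1-p) \<le> 1/4" by (simp add: power2_eq_square algebra_simps)
    have "0 \<le> (q - 1/2)^2" by simp
    hence hq: "q * (1-q) \<le> 1/4" by (simp add: power2_eq_square algebra_simps)
    have "(p * (1-p)) * (q * (1-q)) \<le> (1/4) * (1/4)"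
      by (rule mult_mono[OF hp hq]) (use assms in auto)
    thus ?thesis unfolding r_def by (simp only: mult.assoc)
  qed
  have c0: "0 \<le> c" and c1: "c \<le> 1" unfolding c_def using assms(4) by auto
  have cr1: "c * r \<le> 1" using mult_mono[OF c1 r1] c0 r0 by simp
  have "(1 - c * r) ^ m \<le> exp (- (c * r)) ^ m"
    by (rule power_mono) (use exp_ge_add_one_self[of "- (c * r)"] cr1 in auto)
  also have "\<dots> = exp (- (real m * c * r))" by (simp add: exp_of_nat_mult[symmetric] ac_simps)
  finally have pw: "(1 - c * r) ^ m \<le> exp (- (real m * c * r))" .
  have "exp (\<delta> * a) * (1 - c * r) ^ m \<le> exp (\<delta> * a) * exp (- (real m * c * r))"
    by (rule mult_left_mono[OF pw]) simp
  also have "\<dots> = exp (\<delta> * a - real m * c * r)" by (simp add: exp_add[symmetric])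
  also have "\<dots> \<le> exp (- (\<delta>^2 * (r * real m) / 2))"
  proof -
    have "\<delta> * (1 - \<delta>) - c \<le> - (\<delta>^2 / 2)"
      using exp_neg_le[of \<delta>] assms(4) by (simp add: c_def power2_eq_square algebra_simps)
    hence "(\<delta> * (1 - \<delta>) - c) * (r * real m) \<le> - (\<delta>^2 / 2) * (r * real m)"
      by (rule mult_right_mono) (use r0 in simp)
    hence "\<delta> * a - real m * c * r \<le> - (\<delta>^2 * (r * real m) / 2)"
      unfolding a_def by (simp add: algebra_simps)
    thus ?thesis by simp
  qed
  finally have fin: "exp (\<delta> * a) * (1 - c * r) ^ m \<le> exp (- (\<delta>^2 * (r * real m) / 2))" .
  have "measure_pmf.prob M E \<le> (real n + 1)^2 * exp (- (\<delta>^2 * (r * real m) / 2))"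
  proof -
    have "(real n + 1)^2 * (exp (\<delta> * a) * (1 - c * r) ^ m) \<le> (real n + 1)^2 * exp (- (\<delta>^2 * (r * real m) / 2))"
      by (rule mult_left_mono[OF fin]) simp
    thus ?thesis using order.trans[OF Pbound[unfolded mult.assoc]] by blast
  qed
  moreover have "{(S, T). real (card (goodI m S T)) \<le> (1 - \<delta>) * (4 * p * (1 - p) * q * (1 - q) * real m)} = E"
    unfolding E_def X_def a_def r_def by simp
  ultimately show ?thesis unfolding M_def K_def L_def r_def by simp
qed

end
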